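(* Under the regularity assumption below except for the gain function, suppose in addition that $\nabla^2h$ is constant on $\mathbb{R}^d$ ($h$ is a strictly convex quadratic) and $\mu_{f/h}>0$. Then the regularity assumption holds with gain function $G\equiv1$, and Bregman-SAGA with constant step size $\eta_t=1/(8L_{f/h})$ satisfies, for all $t\ge0$, $$\mathbb{E}[\psi_t]\le\Big(1-\min\big(\tfrac{1}{8\kappa_{f/h}},\tfrac{1}{2n}\big)\Big)^t\psi_0,$$ where $\kappa_{f/h}=L_{f/h}/\mu_{f/h}$.
   Context: For differentiable $\varphi$, $D_\varphi(x,y)=\varphi(x)-\varphi(y)-\nabla\varphi(y)^\top(x-y)$; $h^*$ is the convex conjugate of $h$. $f$ is $L$-relatively smooth and $\mu$-relatively strongly convex w.r.t. $h$ if $\mu D_h(x,y)\le D_f(x,y)\le LD_h(x,y)$ for all $x,y$. Regularity assumption: $f=\frac1n\sum_{i=1}^nf_i$ with each $f_i$ convex and $L_{f/h}$-relatively smooth w.r.t. $h$, $f$ is $\mu_{f/h}$-relatively strongly convex w.r.t. $h$, and $G$ is a gain function such that for all $x,y,v\in\mathbb{R}^d$ and $\lambda\in[-1,1]$: $D_{h^*}(x+\lambda v,x)\le G(x,y,v)\lambda^2D_{h^*}(y+v,y)$. The minimizer $x^\star$ of $f$ satisfies $\nabla f(x^\star)=0$. Bregman-SAGA: set $\phi_i^0=x_0$ for all $i$; at iteration $t$, pick $i_t$ uniformly in $\{1,\dots,n\}$, set $g_t=\nabla f_{i_t}(x_t)-\nabla f_{i_t}(\phi^t_{i_t})+\frac1n\sum_{j=1}^n\nabla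 f_j(\phi^t_j)$, $\nabla h(x_{t+1})=\nabla h(x_t)-\eta_tg_t$, $\phi^{t+1}_{i_t}=x_t$, $\phi^{t+1}_j=\phi^t_j$ for $j\ne i_t$. $H_t=\frac1n\sum_{i=1}^nD_{f_i}(\phi_i^t,x^\star)$ and $\psi_t=\frac{1}{\eta_t}D_h(x^\star,x_t)+\frac n2H_t$. *)

theory Defs
  imports "HOL-Analysis.Analysis"
begin

text \<open>Gradient of a real-valued function (defined where the function is differentiable).\<close>
definition grad :: "('a::real_inner \<Rightarrow> real) \<Rightarrow> 'a \<Rightarrow> 'a" where
  "grad \<phi> x = (SOME D. GDERIV \<phi> x :> D)"

definition bregman :: "('a::real_inner \<Rightarrow> real) \<Rightarrow> 'a \<Rightarrow> 'a \<Rightarrow> real" where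
  "bregman \<phi> x y = \<phi> x - \<phi> y - inner (grad \<phi> y) (x - y)"

text \<open>Convex conjugate (real-valued; finite in the situation of the theorem).\<close>
definition conjugate :: "('a::real_inner \<Rightarrow> real) \<Rightarrow> 'a \<Rightarrow> real" where
  "conjugate \<phi> y = (SUP x. inner y x - \<phi> x)"

definition rel_smooth :: "real \<Rightarrow> ('a::real_inner \<Rightarrow> real) \<Rightarrow> ('a \<Rightarrow> real) \<Rightarrow> bool" where
  "rel_smooth L f h \<longleftrightarrow> (\<forall>x y. bregman f x y \<le> L * bregman h x y)"

definition rel_strongly_convex :: "real \<Rightarrow> ('a::real_inner \<Rightarrow> real) \<Rightarrow> ('a \<Rightarrow> real) \<Rightarrow> bool" where
  "rel_strongly_convex \<mu> f h \<longleftrightarrow> (\<forall>x y. \<mu> * bregman h x y \<le> bregman f x y)"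

definition gain_function :: "('a::real_inner \<Rightarrow> real) \<Rightarrow> ('a \<Rightarrow> 'a \<Rightarrow> 'a \<Rightarrow> real) \<Rightarrow> bool" where
  "gain_function h G \<longleftrightarrow> (\<forall>x y v (s::real). -1 \<le> s \<and> s \<le> 1 \<longrightarrow>
     bregman (conjugate h) (x + s *\<^sub>R v) x \<le> G x y v * s\<^sup>2 * bregman (conjugate h) (y + v) y)"

definition avg_fun :: "nat \<Rightarrow> (nat \<Rightarrow> 'a \<Rightarrow> real) \<Rightarrow> 'a \<Rightarrow> real" where
  "avg_fun n fs = (\<lambda>x. (\<Sum>i<n. fs i x) / real n)"

text \<open>One Bregman-SAGA step with sampled index i: state = (x_t, phi^t).\<close>
definition saga_step :: "('a::real_inner \<Rightarrow> real) \<Rightarrow> (nat \<Rightarrow> 'a \<Rightarrow> real) \<Rightarrow> nat \<Rightarrow> real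
    \<Rightarrow> ('a \<times> (nat \<Rightarrow> 'a)) \<Rightarrow> nat \<Rightarrow> ('a \<times> (nat \<Rightarrow> 'a))" where
  "saga_step h fs n \<eta> st i =
    (let x = fst st; \<phi> = snd st;
         g = grad (fs i) x - grad (fs i) (\<phi> i) + (1 / real n) *\<^sub>R (\<Sum>j<n. grad (fs j) (\<phi> j));
         x' = (SOME z. grad h z = grad h x - \<eta> *\<^sub>R g)
     in (x', \<phi>(i := x)))"

definition saga_state :: "('a::real_inner \<Rightarrow> real) \<Rightarrow> (nat \<Rightarrow> 'a \<Rightarrow> real) \<Rightarrow> nat \<Rightarrow> real
    \<Rightarrow> 'a \<Rightarrow> nat list \<Rightarrow> ('a \<times> (nat \<Rightarrow> 'a))" where
  "saga_state h fs n \<eta> x0 is = foldl (saga_step h fs n \<eta>) (x0, \<lambda>_. x0) is"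

definition saga_psi :: "('a::real_inner \<Rightarrow> real) \<Rightarrow> (nat \<Rightarrow> 'a \<Rightarrow> real) \<Rightarrow> nat \<Rightarrow> real
    \<Rightarrow> 'a \<Rightarrow> ('a \<times> (nat \<Rightarrow> 'a)) \<Rightarrow> real" where
  "saga_psi h fs n \<eta> xstar st =
     (1 / \<eta>) * bregman h xstar (fst st)
     + real n / 2 * ((\<Sum>i<n. bregman (fs i) (snd st i) xstar) / real n)"

text \<open>Expectation over t i.i.d. uniform indices in {0..<n}.\<close>
definition expect_idx :: "nat \<Rightarrow> nat \<Rightarrow> (nat list \<Rightarrow> real) \<Rightarrow> real" where
  "expect_idx n t F = (\<Sum>is\<in>{is. length is = t \<and> set is \<subseteq> {..<n}}. F is) / real n ^ t"

end

theory Submission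
  imports Defs
begin


lemma gderiv_unique:
  assumes "GDERIV f x :> D" "GDERIV f x :> D'" shows "D = D'"
proof -
  have "(\<lambda>h. inner h D) = (\<lambda>h. inner h D')"
    using assms unfolding gderiv_def by (rule has_derivative_unique)
  then have "inner (D - D') D = inner (D - D') D'" by metis
  then have "inner (D - D') (D - D') = 0" by (simp add: inner_diff_right)
  then show ?thesis by simp
qed

lemma grad_eq: "GDERIV f x :> D \<Longrightarrow> grad f x = D"
proof -
  assume d: "GDERIV f x :> D"
  then have "GDERIV f x :> (SOME D. GDERIV f x :> D)" by (rule someI)
  then show ?thesis unfolding grad_def using d by (rule gderiv_unique)
qed

lemma diff_gderiv:
  fixes f :: "'a::euclidean_space \<Rightarrow> real"
  assumes "f differentiable (at x)" shows "\<exists>D. GDERIV f x :> D"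
proof -
  obtain f' where d: "(f has_derivative f') (at x)" using assms unfolding differentiable_def by blast
  then have lin: "linear f'" using has_derivative_linear by blast
  define D where "D = (\<Sum>i\<in>Basis. f' i *\<^sub>R i)"
  have "f' h = inner h D" for h
  proof -
    have "f' h = f' h \<bullet> 1" by simp
    also have "\<dots> = (\<Sum>i\<in>Basis. (h\<bullet>i) * (f' i \<bullet> 1))" by (rule Linear_Algebra.linear_componentwise[OF lin])
    also have "\<dots> = inner h D" unfolding D_def by (simp add: inner_sum_right mult.commute)
    finally show ?thesis .
  qed
  then have "f' = (\<lambda>h. inner h D)" by auto
  then show ?thesis using d unfolding gderiv_def by blast
qed

lemma grad_works:
  fixes f :: "'a::euclidean_space \<Rightarrow> real"
  shows "f differentiable (at x) \<Longrightarrow> GDERIV f x :> grad f x"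
  using diff_gderiv grad_eq by metis

lemma convex_tangent:
  fixes f :: "'a::real_inner \<Rightarrow> real"
  assumes cv: "convex_on UNIV f" and d: "GDERIV f y :> D"
  shows "f y + inner D (x - y) \<le> f x"
proof -
  define g where "g t = f (y + t *\<^sub>R (x - y))" for t :: real
  have gc: "convex_on UNIV g"
  proof (rule convex_onI)
    fix t a b :: real assume "t > 0" "t < 1"
    have "y + ((1 - t) *\<^sub>R a + t *\<^sub>R b) *\<^sub>R (x - y) = (1 - t) *\<^sub>R (y + a *\<^sub>R (x - y)) + t *\<^sub>R (y + b *\<^sub>R (x - y))"
      by (simp add: algebra_simps)
    then show "g ((1 - t) *\<^sub>R a + t *\<^sub>R b) \<le> (1 - t) * g a + t * g b"
      unfolding g_def using convex_onD[OF cv, of t] \<open>t > 0\<close> \<open>t < 1\<close> by simp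
  qed simp
  have "((\<lambda>t. y + t *\<^sub>R (x - y)) has_derivative (\<lambda>t. t *\<^sub>R (x - y))) (at 0)"
    by (intro derivative_eq_intros) auto
  moreover have "(f has_derivative (\<lambda>h. inner h D)) (at (y + 0 *\<^sub>R (x - y)))"
    using d unfolding gderiv_def by simp
  ultimately have "(g has_derivative (\<lambda>t. inner (t *\<^sub>R (x - y)) D)) (at 0)"
    unfolding g_def using has_derivative_compose by blast
  moreover have "(*) (inner (x - y) D) = (\<lambda>t. inner (t *\<^sub>R (x - y)) D)"
    by (auto simp: fun_eq_iff)
  ultimately have "(g has_field_derivative inner (x - y) D) (at 0)"
    unfolding has_field_derivative_def by simp
  then have "g 1 - g 0 \<ge> inner (x - y) D * (1 - 0)"
    by (intro convex_on_imp_above_tangent[OF gc]) auto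
  then show ?thesis unfolding g_def by (simp add: inner_commute)
qed



lemma quad_gderiv:
  fixes M :: "'a::euclidean_space \<Rightarrow> 'a"
  assumes lin: "linear M" and sym: "\<And>u v. inner u (M v) = inner (M u) v"
  shows "GDERIV (\<lambda>y. (1/2) * inner (M y) y + inner p y + c0) y :> M y + p"
proof -
  have bl: "bounded_linear M" using lin by (simp add: linear_conv_bounded_linear)
  have dM: "(M has_derivative M) (at y)" by (rule bounded_linear_imp_has_derivative[OF bl])
  have d1: "((\<lambda>y. inner (M y) y) has_derivative (\<lambda>h. inner (M y) h + inner (M h) y)) (at y)"
    using has_derivative_inner[OF dM has_derivative_id] by simp
  have d2: "((\<lambda>y. inner p y) has_derivative (\<lambda>h. inner p h)) (at y)"
    by (rule bounded_linear_imp_has_derivative) (rule bounded_linear_inner_right)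
  have "((\<lambda>y. (1/2) * inner (M y) y + inner p y + c0) has_derivative
         (\<lambda>h. (1/2) * (inner (M y) h + inner (M h) y) + inner p h + 0)) (at y)"
    by (intro has_derivative_add has_derivative_mult_right d1 d2 has_derivative_const)
  moreover have "(\<lambda>h. (1/2) * (inner (M y) h + inner (M h) y) + inner p h) = (\<lambda>h. inner h (M y + p))"
    using sym by (auto simp: fun_eq_iff inner_add_right inner_commute)
  ultimately show ?thesis unfolding gderiv_def by simp
qed

lemma quad_bregman:
  fixes M :: "'a::euclidean_space \<Rightarrow> 'a"
  assumes lin: "linear M" and sym: "\<And>u v. inner u (M v) = inner (M u) v"
  shows "bregman (\<lambda>y. (1/2) * inner (M y) y + inner p y + c0) x y = (1/2) * inner (M (x - y)) (x - y)"
proof -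
  have g: "grad (\<lambda>y. (1/2) * inner (M y) y + inner p y + c0) y = M y + p"
    by (rule grad_eq[OF quad_gderiv[OF lin sym]])
  have s: "inner (M x) y = inner (M y) x" using sym[of x y] by (simp add: inner_commute)
  show ?thesis unfolding bregman_def g
    using s by (simp add: linear_diff[OF lin] inner_diff_left inner_diff_right inner_add_left
        inner_commute algebra_simps)
qed

locale pdop =
  fixes S :: "'a::euclidean_space \<Rightarrow> 'a"
  assumes lin: "linear S" and sym: "\<And>u v. inner u (S v) = inner (S u) v"
    and pos: "\<And>v. v \<noteq> 0 \<Longrightarrow> inner v (S v) > 0"
begin

definition q where "q v = inner v (S v)"

lemma q_nonneg: "q v \<ge> 0"
  unfolding q_def using pos[of v] by (cases "v = 0") (auto simp: linear_0[OF lin])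

lemma inj_S: "inj S"
proof (rule injI)
  fix a b assume "S a = S b"
  then have "S (a - b) = 0" by (simp add: linear_diff[OF lin])
  then have "inner (a - b) (S (a - b)) = 0" by simp
  then show "a = b" using pos[of "a - b"] by (cases "a = b") auto
qed

lemma surj_S: "surj S"
  by (rule linear_injective_imp_surjective[OF lin inj_S]) simp

definition T where "T = inv S"

lemma ST[simp]: "S (T w) = w"
  unfolding T_def using surj_S by (simp add: surj_f_inv_f)

lemma TS[simp]: "T (S v) = v"
  unfolding T_def using inj_S by simp

lemma S_eq_iff: "S a = S b \<longleftrightarrow> a = b"
  using inj_S by (auto dest: injD)

lemma lin_T: "linear T"
proof (rule linearI)
  fix a b show "T (a + b) = T a + T b"
    using S_eq_iff by (metis ST linear_add[OF lin])
next
  fix r a show "T (r *\<^sub>R a) = r *\<^sub>R T a"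
    using S_eq_iff by (metis ST linear_scale[OF lin])
qed

lemma sym_T: "inner u (T v) = inner (T u) v"
proof -
  have "inner u (T v) = inner (S (T u)) (T v)" by simp
  also have "\<dots> = inner (T u) (S (T v))" by (metis sym inner_commute)
  finally show ?thesis by simp
qed

lemma q_add: "q (a + b) = q a + 2 * inner a (S b) + q b"
  unfolding q_def using sym[of b a]
  by (simp add: linear_add[OF lin] inner_add_left inner_add_right inner_commute)

lemma q_diff: "q (a - b) = q a - 2 * inner a (S b) + q b"
  unfolding q_def using sym[of b a]
  by (simp add: linear_diff[OF lin] inner_diff_left inner_diff_right inner_commute)

lemma q_scale: "q (r *\<^sub>R a) = r\<^sup>2 * q a"
  unfolding q_def by (simp add: linear_scale[OF lin] power2_eq_square)

lemma q_add_le: "q (a + b) \<le> 2 * q a + 2 * q b"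
  using q_add[of a b] q_diff[of a b] q_nonneg[of "a - b"] by linarith

lemma q_var:
  assumes "finite I" "card I > 0"
  shows "(\<Sum>i\<in>I. q (c i - (1 / real (card I)) *\<^sub>R (\<Sum>j\<in>I. c j))) \<le> (\<Sum>i\<in>I. q (c i))"
proof -
  define m where "m = (1 / real (card I)) *\<^sub>R (\<Sum>j\<in>I. c j)"
  have sm: "(\<Sum>j\<in>I. c j) = real (card I) *\<^sub>R m" unfolding m_def using assms by simp
  have "(\<Sum>i\<in>I. q (c i - m)) = (\<Sum>i\<in>I. q (c i)) - 2 * inner (\<Sum>i\<in>I. c i) (S m) + real (card I) * q m"
    by (simp add: q_diff sum.distrib sum_subtractf inner_sum_left sum_distrib_left)
  also have "\<dots> = (\<Sum>i\<in>I. q (c i)) - real (card I) * q m"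
    unfolding sm by (simp add: q_def)
  also have "\<dots> \<le> (\<Sum>i\<in>I. q (c i))" using q_nonneg[of m] by simp
  finally show ?thesis unfolding m_def .
qed

definition qd where "qd g = q (T g)"

lemma qd_eq: "qd g = inner (T g) g"
  unfolding qd_def q_def by simp

lemma qd_nonneg: "qd g \<ge> 0" unfolding qd_def by (rule q_nonneg)

lemma qd_add_le: "qd (a + b) \<le> 2 * qd a + 2 * qd b"
  unfolding qd_def using q_add_le by (simp add: linear_add[OF lin_T])

lemma qd_var:
  assumes "finite I" "card I > 0"
  shows "(\<Sum>i\<in>I. qd (c i - (1 / real (card I)) *\<^sub>R (\<Sum>j\<in>I. c j))) \<le> (\<Sum>i\<in>I. qd (c i))"
  using q_var[OF assms, of "\<lambda>i. T (c i)"] unfolding qd_def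
  by (simp add: linear_diff[OF lin_T] linear_scale[OF lin_T] linear_sum[OF lin_T])

end



lemma avg_gderiv:
  fixes fs :: "nat \<Rightarrow> 'a::euclidean_space \<Rightarrow> real"
  assumes "\<forall>i<n. GDERIV (fs i) x :> g i"
  shows "GDERIV (avg_fun n fs) x :> (1 / real n) *\<^sub>R (\<Sum>i<n. g i)"
proof -
  have d: "((\<lambda>x. \<Sum>i<n. fs i x) has_derivative (\<lambda>h. \<Sum>i<n. inner h (g i))) (at x)"
    using assms unfolding gderiv_def by (intro has_derivative_sum) auto
  have "((\<lambda>x. (1 / real n) * (\<Sum>i<n. fs i x)) has_derivative (\<lambda>h. (1 / real n) * (\<Sum>i<n. inner h (g i)))) (at x)"
    by (rule has_derivative_mult_right[OF d])
  moreover have "avg_fun n fs = (\<lambda>x. (1 / real n) * (\<Sum>i<n. fs i x))"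
    unfolding avg_fun_def by auto
  moreover have "(\<lambda>h. (1 / real n) * (\<Sum>i<n. inner h (g i))) = (\<lambda>h. inner h ((1 / real n) *\<^sub>R (\<Sum>i<n. g i)))"
    by (auto simp: inner_sum_right)
  ultimately show ?thesis unfolding gderiv_def by simp
qed

context pdop begin

lemma cocoercive:
  fixes f :: "'a \<Rightarrow> real"
  assumes cvx: "convex_on UNIV f" and diff: "\<And>x. f differentiable (at x)"
    and sm: "\<And>x y. bregman f x y \<le> L * ((1/2) * q (x - y))" and L: "L > 0"
  shows "qd (grad f x - grad f y) \<le> 2 * L * bregman f x y"
proof -
  define gx gy where "gx = grad f x" and "gy = grad f y"
  define d where "d = gx - gy"
  define z where "z = x - (1 / L) *\<^sub>R T d"
  define Q where "Q = qd d"
  have c1: "f y + inner gy (z - y) \<le> f z"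
    unfolding gy_def by (rule convex_tangent[OF cvx grad_works[OF diff]])
  have c2: "f z - f x - inner gx (z - x) \<le> L * ((1/2) * q (z - x))"
    using sm[of z x] unfolding bregman_def gx_def .
  have zx: "z - x = (- (1 / L)) *\<^sub>R T d" unfolding z_def by simp
  have qzx: "q (z - x) = (1 / L)\<^sup>2 * Q"
    unfolding zx Q_def qd_def q_scale by (simp add: power2_eq_square)
  have i1: "inner gx (z - x) = - (1 / L) * inner gx (T d)" unfolding zx by simp
  have i2: "inner gy (z - y) = inner gy (x - y) - (1 / L) * inner gy (T d)"
    unfolding z_def by (simp add: inner_diff_right)
  have Qe: "Q = inner gx (T d) - inner gy (T d)"
    unfolding Q_def qd_eq d_def by (simp add: inner_commute inner_diff_right inner_diff_left)
  have e0: "L * ((1/2) * q (z - x)) = Q / (2 * L)"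
    unfolding qzx using L by (simp add: power2_eq_square field_simps)
  have e1: "f y + inner gy (x - y) - inner gy (T d) / L \<le> f z" using c1 i2 by simp
  have e2: "f z \<le> f x - inner gx (T d) / L + Q / (2 * L)" using c2 i1 e0 by simp
  have e3: "inner gx (T d) / L - inner gy (T d) / L = Q / L" using Qe by (simp add: diff_divide_distrib)
  have key: "Q / L - Q / (2 * L) \<le> f x - f y - inner gy (x - y)"
    using e1 e2 e3 by linarith
  have "Q / L - Q / (2 * L) = Q / (2 * L)" using L by (simp add: field_simps)
  then have "Q / (2 * L) \<le> bregman f x y" using key unfolding bregman_def gy_def by simp
  then show ?thesis unfolding Q_def d_def gx_def gy_def using L by (simp add: field_simps)
qed

end


lemma (in pdop) qd_neg: "qd (- v) = qd v"
  unfolding qd_def using q_scale[of "-1" "T v"] by (simp add: linear_neg[OF lin_T])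

locale saga = pdop S for S :: "'a::euclidean_space \<Rightarrow> 'a" +
  fixes h :: "'a \<Rightarrow> real" and fs :: "nat \<Rightarrow> 'a \<Rightarrow> real" and n :: nat and L \<mu> :: real and b xs :: 'a
  assumes npos: "n > 0"
  and cvx: "\<And>i. i < n \<Longrightarrow> convex_on UNIV (fs i)"
  and diff: "\<And>i x. i < n \<Longrightarrow> fs i differentiable (at x)"
  and smooth: "\<And>i x y. i < n \<Longrightarrow> bregman (fs i) x y \<le> L * ((1/2) * q (x - y))"
  and Lpos: "L > 0"
  and strong: "\<And>x y. \<mu> * ((1/2) * q (x - y)) \<le> bregman (avg_fun n fs) x y"
  and grad_h: "\<And>x. grad h x = S x + b"
  and xs_min: "\<And>x. avg_fun n fs xs \<le> avg_fun n fs x"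
begin

lemma gavg: "GDERIV (avg_fun n fs) x :> (1 / real n) *\<^sub>R (\<Sum>i<n. grad (fs i) x)"
  by (rule avg_gderiv) (auto intro: grad_works diff)

lemma grad_avg_xs: "(\<Sum>i<n. grad (fs i) xs) = 0"
proof -
  let ?D = "(1 / real n) *\<^sub>R (\<Sum>i<n. grad (fs i) xs)"
  have "(\<lambda>h. inner h ?D) = (\<lambda>h. 0)"
    using gavg[of xs] unfolding gderiv_def
    by (rule has_derivative_local_min) (auto intro: always_eventually xs_min)
  then have "inner ?D ?D = 0" by metis
  then have "?D = 0" by (simp only: inner_eq_zero_iff)
  moreover have "(\<Sum>i<n. grad (fs i) xs) = real n *\<^sub>R ?D" using npos by simp
  ultimately show ?thesis by (metis scaleR_zero_right)
qed

lemma breg_nonneg: assumes "i < n" shows "bregman (fs i) x y \<ge> 0"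
proof -
  have "GDERIV (fs i) y :> grad (fs i) y" by (rule grad_works[OF diff[OF assms]])
  from convex_tangent[OF cvx[OF assms] this, of x] show ?thesis unfolding bregman_def by simp
qed

lemma cocoer: "i < n \<Longrightarrow> qd (grad (fs i) x - grad (fs i) y) \<le> 2 * L * bregman (fs i) x y"
  by (rule cocoercive[OF cvx diff smooth Lpos])

lemma step_eq:
  "saga_step h fs n \<eta> (x, \<phi>) i =
    (x - \<eta> *\<^sub>R T (grad (fs i) x - grad (fs i) (\<phi> i) + (1 / real n) *\<^sub>R (\<Sum>j<n. grad (fs j) (\<phi> j))),
     \<phi>(i := x))"
proof -
  define g where "g = grad (fs i) x - grad (fs i) (\<phi> i) + (1 / real n) *\<^sub>R (\<Sum>j<n. grad (fs j) (\<phi> j))"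
  have "(SOME z. grad h z = grad h x - \<eta> *\<^sub>R g) = x - \<eta> *\<^sub>R T g"
  proof (rule some_equality)
    show "grad h (x - \<eta> *\<^sub>R T g) = grad h x - \<eta> *\<^sub>R g"
      unfolding grad_h by (simp add: linear_diff[OF lin] linear_scale[OF lin])
  next
    fix z assume "grad h z = grad h x - \<eta> *\<^sub>R g"
    then have "S z = S (x - \<eta> *\<^sub>R T g)"
      unfolding grad_h by (simp add: linear_diff[OF lin] linear_scale[OF lin])
    then show "z = x - \<eta> *\<^sub>R T g" using S_eq_iff by blast
  qed
  then show ?thesis unfolding saga_step_def Let_def g_def by simp
qed

lemma psi_eq:
  "saga_psi h' fs n \<eta> xs (x, \<phi>) = (1 / \<eta>) * bregman h' xs x + (\<Sum>i<n. bregman (fs i) (\<phi> i) xs) / 2"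
  unfolding saga_psi_def using npos by simp

end


lemma aux_lin: fixes e D H nm nD A nH :: real
  shows "e \<le> (D + H) / 4 \<Longrightarrow> nm \<le> nD \<Longrightarrow> 0 \<le> D \<Longrightarrow>
    A + (- nD - D) + e + (nH - H + D) / 2 \<le> A - nm + nH / 2 - H / 4"
  by (simp add: field_simps)

context saga begin

lemma one_step:
  assumes breg_h: "\<And>x y. bregman h x y = (1/2) * q (x - y)"
  shows "(\<Sum>i<n. saga_psi h fs n (1 / (8 * L)) xs (saga_step h fs n (1 / (8 * L)) (x, \<phi>) i)) / real n
     \<le> (1 - min (\<mu> / (8 * L)) (1 / (2 * real n))) * saga_psi h fs n (1 / (8 * L)) xs (x, \<phi>)"
proof -
  define \<eta> where "\<eta> = 1 / (8 * L)"
  define gi where "gi i z = grad (fs i) z" for i z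
  define m where "m = (1 / real n) *\<^sub>R (\<Sum>j<n. gi j (\<phi> j))"
  define G where "G i = gi i x - gi i (\<phi> i) + m" for i
  define u where "u = xs - x"
  define Qu where "Qu = q u"
  define Dp where "Dp i = bregman (fs i) (\<phi> i) xs" for i
  define Dx where "Dx i = bregman (fs i) x xs" for i
  define Hs where "Hs = (\<Sum>i<n. Dp i)"
  define Dxs where "Dxs = (\<Sum>i<n. Dx i)"
  define Dfa where "Dfa = bregman (avg_fun n fs) xs x"
  have eta_pos: "\<eta> > 0" unfolding \<eta>_def using Lpos by simp
  have psi0: "saga_psi h fs n \<eta> xs (x, \<phi>) = Qu / (2 * \<eta>) + Hs / 2"
    unfolding psi_eq breg_h Qu_def u_def Hs_def Dp_def by simp
  have psi_i: "saga_psi h fs n \<eta> xs (saga_step h fs n \<eta> (x, \<phi>) i)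
      = Qu / (2 * \<eta>) + inner u (G i) + (\<eta> / 2) * qd (G i) + (Hs - Dp i + Dx i) / 2" if i: "i < n" for i
  proof -
    have st: "saga_step h fs n \<eta> (x, \<phi>) i = (x - \<eta> *\<^sub>R T (G i), \<phi>(i := x))"
      unfolding step_eq G_def gi_def m_def ..
    have e1: "xs - (x - \<eta> *\<^sub>R T (G i)) = u + \<eta> *\<^sub>R T (G i)" unfolding u_def by simp
    have e2: "q (u + \<eta> *\<^sub>R T (G i)) = Qu + 2 * \<eta> * inner u (G i) + \<eta>\<^sup>2 * qd (G i)"
      unfolding q_add q_scale Qu_def qd_def by (simp add: linear_scale[OF lin])
    have e3: "(\<Sum>j<n. bregman (fs j) ((\<phi>(i := x)) j) xs) = (\<Sum>j<n. Dp j + (if j = i then Dx i - Dp i else 0))"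
      by (rule sum.cong) (auto simp: Dp_def Dx_def)
    have e4: "(\<Sum>j<n. bregman (fs j) ((\<phi>(i := x)) j) xs) = Hs - Dp i + Dx i"
      unfolding e3 sum.distrib Hs_def using i by simp
    show ?thesis unfolding st psi_eq breg_h e1 e2 e4 using eta_pos
      by (simp add: field_simps power2_eq_square)
  qed
  have sumG: "(\<Sum>i<n. G i) = (\<Sum>i<n. gi i x)"
    unfolding G_def m_def using npos by (simp add: sum.distrib sum_subtractf sum_constant_scaleR)
  have Dxs_eq: "Dxs = (\<Sum>i<n. fs i x) - (\<Sum>i<n. fs i xs)"
    unfolding Dxs_def Dx_def bregman_def
    using grad_avg_xs by (simp add: sum_subtractf inner_sum_left[symmetric] gi_def)
  have Dfa_eq: "real n * Dfa = - Dxs - inner u (\<Sum>i<n. gi i x)"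
  proof -
    have "Dfa = avg_fun n fs xs - avg_fun n fs x - inner ((1 / real n) *\<^sub>R (\<Sum>i<n. gi i x)) (xs - x)"
      unfolding Dfa_def bregman_def grad_eq[OF gavg] gi_def ..
    then have "real n * Dfa = real n * ((\<Sum>i<n. fs i xs) / real n) - real n * ((\<Sum>i<n. fs i x) / real n)
        - real n * ((1 / real n) * inner (\<Sum>i<n. gi i x) (xs - x))"
      unfolding avg_fun_def by (simp only: right_diff_distrib inner_scaleR_left)
    also have "\<dots> = (\<Sum>i<n. fs i xs) - (\<Sum>i<n. fs i x) - inner (\<Sum>i<n. gi i x) (xs - x)"
      using npos by simp
    finally show ?thesis unfolding Dxs_eq u_def by (simp add: inner_commute)
  qed
  have Dfa_ge: "Dfa \<ge> \<mu> * ((1/2) * Qu)" unfolding Dfa_def Qu_def u_def by (rule strong)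
  have Dxs_ge: "Dxs \<ge> 0" unfolding Dxs_def Dx_def by (rule sum_nonneg) (rule breg_nonneg, simp)
  have Hs_ge: "Hs \<ge> 0" unfolding Hs_def Dp_def by (rule sum_nonneg) (rule breg_nonneg, simp)
  have Qu_ge: "Qu \<ge> 0" unfolding Qu_def by (rule q_nonneg)
  define a where "a i = gi i x - gi i xs" for i
  define c where "c i = gi i (\<phi> i) - gi i xs" for i
  have mc: "m = (1 / real (card {..<n})) *\<^sub>R (\<Sum>j<n. c j)"
    unfolding m_def c_def using grad_avg_xs by (simp add: sum_subtractf gi_def)
  have Ga: "G i = a i + - (c i - m)" for i unfolding G_def a_def c_def by simp
  have qG: "qd (G i) \<le> 2 * qd (a i) + 2 * qd (c i - m)" for i
    unfolding Ga using qd_add_le[of "a i" "- (c i - m)"] qd_neg[of "c i - m"] by simp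
  have var: "(\<Sum>i<n. qd (c i - m)) \<le> (\<Sum>i<n. qd (c i))"
    unfolding mc by (rule qd_var) (use npos in auto)
  have qa: "(\<Sum>i<n. qd (a i)) \<le> (\<Sum>i<n. 2 * L * Dx i)"
    by (rule sum_mono) (simp add: a_def Dx_def gi_def cocoer)
  have qc: "(\<Sum>i<n. qd (c i)) \<le> (\<Sum>i<n. 2 * L * Dp i)"
    by (rule sum_mono) (simp add: c_def Dp_def gi_def cocoer)
  have sumqG: "(\<Sum>i<n. qd (G i)) \<le> 4 * L * Dxs + 4 * L * Hs"
  proof -
    have "(\<Sum>i<n. qd (G i)) \<le> (\<Sum>i<n. 2 * qd (a i) + 2 * qd (c i - m))"
      by (rule sum_mono) (rule qG)
    also have "\<dots> = 2 * (\<Sum>i<n. qd (a i)) + 2 * (\<Sum>i<n. qd (c i - m))"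
      by (simp add: sum.distrib sum_distrib_left)
    also have "\<dots> \<le> 2 * (\<Sum>i<n. 2 * L * Dx i) + 2 * (\<Sum>i<n. 2 * L * Dp i)"
      using qa qc var by linarith
    also have "\<dots> = 4 * L * Dxs + 4 * L * Hs"
      unfolding Dxs_def Hs_def by (simp add: sum_distrib_left mult.assoc)
    finally show ?thesis .
  qed
  have sumpsi: "(\<Sum>i<n. saga_psi h fs n \<eta> xs (saga_step h fs n \<eta> (x, \<phi>) i))
      = real n * (Qu / (2 * \<eta>)) + inner u (\<Sum>i<n. G i) + (\<eta> / 2) * (\<Sum>i<n. qd (G i))
        + (real n * Hs - Hs + Dxs) / 2"
  proof -
    have "(\<Sum>i<n. saga_psi h fs n \<eta> xs (saga_step h fs n \<eta> (x, \<phi>) i))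
       = (\<Sum>i<n. Qu / (2 * \<eta>) + inner u (G i) + (\<eta> / 2) * qd (G i) + (Hs - Dp i + Dx i) / 2)"
      by (rule sum.cong) (auto simp: psi_i)
    also have "\<dots> = real n * (Qu / (2 * \<eta>)) + inner u (\<Sum>i<n. G i) + (\<eta> / 2) * (\<Sum>i<n. qd (G i))
        + (real n * Hs - Hs + Dxs) / 2"
      unfolding Hs_def Dxs_def
      by (simp add: sum.distrib sum_subtractf inner_sum_right sum_distrib_left sum_divide_distrib[symmetric])
    finally show ?thesis .
  qed
  define \<rho> where "\<rho> = min (\<mu> / (8 * L)) (1 / (2 * real n))"
  have r1: "\<rho> \<le> \<mu> / (8 * L)" and r2: "\<rho> \<le> 1 / (2 * real n)" unfolding \<rho>_def by auto
  have Qeta: "Qu / (2 * \<eta>) = 4 * L * Qu" unfolding \<eta>_def using Lpos by simp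
  have etaL: "(\<eta> / 2) * (4 * L * Dxs + 4 * L * Hs) = (Dxs + Hs) / 4"
    unfolding \<eta>_def using Lpos by (simp add: field_simps)
  have "(\<eta> / 2) * (\<Sum>i<n. qd (G i)) \<le> (\<eta> / 2) * (4 * L * Dxs + 4 * L * Hs)"
    using sumqG eta_pos by (simp add: mult_left_mono)
  then have b1: "(\<eta> / 2) * (\<Sum>i<n. qd (G i)) \<le> (Dxs + Hs) / 4" using etaL by simp
  have b2: "inner u (\<Sum>i<n. G i) = - (real n * Dfa) - Dxs" using Dfa_eq sumG by simp
  have b3: "real n * Dfa \<ge> real n * (\<mu> * ((1/2) * Qu))" using Dfa_ge by (intro mult_left_mono) auto
  have S1: "(\<Sum>i<n. saga_psi h fs n \<eta> xs (saga_step h fs n \<eta> (x, \<phi>) i))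
      \<le> real n * (4 * L * Qu) - real n * (\<mu> * ((1/2) * Qu)) + real n * Hs / 2 - Hs / 4"
    unfolding sumpsi Qeta b2 by (rule aux_lin[OF b1 b3 Dxs_ge])
  have t1: "real n * (4 * L * Qu) - real n * (\<mu> * ((1/2) * Qu)) \<le> real n * ((1 - \<rho>) * (4 * L * Qu))"
  proof -
    have "\<rho> * (4 * L * Qu) \<le> (\<mu> / (8 * L)) * (4 * L * Qu)"
      using r1 Lpos Qu_ge by (intro mult_right_mono) auto
    also have "\<dots> = \<mu> * ((1/2) * Qu)" using Lpos by (simp add: field_simps)
    finally have f1: "\<rho> * (4 * L * Qu) \<le> \<mu> * ((1/2) * Qu)" .
    have "(1 - \<rho>) * (4 * L * Qu) = 4 * L * Qu - \<rho> * (4 * L * Qu)" by (simp add: left_diff_distrib)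
    then have "4 * L * Qu - \<mu> * ((1/2) * Qu) \<le> (1 - \<rho>) * (4 * L * Qu)" using f1 by linarith
    then have "real n * (4 * L * Qu - \<mu> * ((1/2) * Qu)) \<le> real n * ((1 - \<rho>) * (4 * L * Qu))"
      by (rule mult_left_mono) simp
    then show ?thesis by (simp only: right_diff_distrib)
  qed
  have t2: "real n * Hs / 2 - Hs / 4 \<le> real n * ((1 - \<rho>) * (Hs / 2))"
  proof -
    have "real n * (\<rho> * (Hs / 2)) \<le> real n * ((1 / (2 * real n)) * (Hs / 2))"
      using r2 Hs_ge npos by (intro mult_left_mono mult_right_mono) auto
    also have "\<dots> = Hs / 4" using npos by (simp add: field_simps)
    finally have f2: "real n * (\<rho> * (Hs / 2)) \<le> Hs / 4" .
    have "real n * ((1 - \<rho>) * (Hs / 2)) = real n * Hs / 2 - real n * (\<rho> * (Hs / 2))"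
      by (simp add: left_diff_distrib right_diff_distrib)
    then show ?thesis using f2 by linarith
  qed
  have "(\<Sum>i<n. saga_psi h fs n \<eta> xs (saga_step h fs n \<eta> (x, \<phi>) i)) \<le> real n * ((1 - \<rho>) * saga_psi h fs n \<eta> xs (x, \<phi>))"
  proof -
    have "real n * ((1 - \<rho>) * (4 * L * Qu + Hs / 2)) = real n * ((1 - \<rho>) * (4 * L * Qu)) + real n * ((1 - \<rho>) * (Hs / 2))"
      by (simp add: algebra_simps)
    then show ?thesis using S1 t1 t2 unfolding psi0 Qeta by linarith
  qed
  then show ?thesis unfolding \<eta>_def[symmetric] \<rho>_def[symmetric] using npos
    by (simp add: pos_divide_le_eq mult.commute)
qed

end


lemma lists_Suc:
  "{is. length is = Suc t \<and> set is \<subseteq> {..<n}} = (\<lambda>(is, i). is @ [i]) ` ({is. length is = t \<and> set is \<subseteq> {..<n}} \<times> {..<n})"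
proof (rule set_eqI, rule iffI)
  fix xs assume "xs \<in> {is. length is = Suc t \<and> set is \<subseteq> {..<n}}"
  then have l: "length xs = Suc t" and s: "set xs \<subseteq> {..<n}" by auto
  then have "xs \<noteq> []" by auto
  then obtain ys y where xs: "xs = ys @ [y]" by (metis rev_exhaust)
  show "xs \<in> (\<lambda>(is, i). is @ [i]) ` ({is. length is = t \<and> set is \<subseteq> {..<n}} \<times> {..<n})"
    using l s unfolding xs by (auto intro!: image_eqI[where x="(ys, y)"])
qed auto

lemma sum_lists_Suc:
  "(\<Sum>is\<in>{is. length is = Suc t \<and> set is \<subseteq> {..<n}}. F is)
   = (\<Sum>is\<in>{is. length is = t \<and> set is \<subseteq> {..<n}}. \<Sum>i<n. F (is @ [i]))"
proof -
  have inj: "inj_on (\<lambda>(is, i). is @ [i]) ({is. length is = t \<and> set is \<subseteq> {..<n}} \<times> {..<n})"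
    by (auto simp: inj_on_def)
  show ?thesis unfolding lists_Suc sum.reindex[OF inj]
    by (simp add: sum.cartesian_product case_prod_unfold)
qed

lemma expect_iter:
  fixes P :: "'s \<Rightarrow> real"
  assumes n: "n > 0" and r: "r \<ge> 0"
    and st: "\<And>s. (\<Sum>i<n. P (step s i)) / real n \<le> r * P s"
  shows "expect_idx n t (\<lambda>is. P (foldl step s0 is)) \<le> r ^ t * P s0"
proof (induction t)
  case 0
  have "{is. length is = 0 \<and> set is \<subseteq> {..<n}} = {[]}" by auto
  then show ?case unfolding expect_idx_def by simp
next
  case (Suc t)
  let ?L = "{is. length is = t \<and> set is \<subseteq> {..<n}}"
  have "expect_idx n (Suc t) (\<lambda>is. P (foldl step s0 is))
      = (\<Sum>is\<in>?L. (\<Sum>i<n. P (step (foldl step s0 is) i)) / real n) / real n ^ t"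
    unfolding expect_idx_def sum_lists_Suc using n
    by (simp add: sum_divide_distrib[symmetric] field_simps)
  also have "\<dots> \<le> (\<Sum>is\<in>?L. r * P (foldl step s0 is)) / real n ^ t"
    by (intro divide_right_mono sum_mono st) simp
  also have "\<dots> = r * expect_idx n t (\<lambda>is. P (foldl step s0 is))"
    unfolding expect_idx_def by (simp add: sum_distrib_left)
  also have "\<dots> \<le> r * (r ^ t * P s0)" using Suc r by (rule mult_left_mono)
  finally show ?case by simp
qed

context pdop begin

lemma conj_eq:
  assumes hq: "h = (\<lambda>x. (1/2) * inner (S x) x + inner b x + c)"
  shows "conjugate h y = (1/2) * inner (T (y - b)) (y - b) - c"
proof -
  define w where "w = y - b"
  define x0 where "x0 = T w"
  have val: "inner y x - h x = inner w x - (1/2) * q x - c" for x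
    unfolding hq w_def q_def by (simp add: inner_diff_left inner_diff_right inner_commute)
  have qx0: "q x0 = inner (T w) w" unfolding x0_def q_def by (simp add: inner_commute)
  have "conjugate h y = Sup (range (\<lambda>x. inner y x - h x))" unfolding conjugate_def ..
  also have "\<dots> = (1/2) * inner (T w) w - c"
  proof (rule cSup_eq_maximum)
    show "(1/2) * inner (T w) w - c \<in> range (\<lambda>x. inner y x - h x)"
    proof
      show "(1/2) * inner (T w) w - c = inner y x0 - h x0"
        unfolding val qx0 unfolding x0_def by (simp add: inner_commute)
    qed simp
  next
    fix z assume "z \<in> range (\<lambda>x. inner y x - h x)"
    then obtain x where z: "z = inner y x - h x" by auto
    have "q (x - x0) \<ge> 0" by (rule q_nonneg)
    then have "0 \<le> q x - 2 * inner x w + q x0" unfolding q_diff x0_def by simp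
    then show "z \<le> (1/2) * inner (T w) w - c" unfolding z val qx0
      by (simp add: inner_commute)
  qed
  finally show ?thesis unfolding w_def .
qed

lemma conj_form:
  assumes hq: "h = (\<lambda>x. (1/2) * inner (S x) x + inner b x + c)"
  shows "conjugate h = (\<lambda>y. (1/2) * inner (T y) y + inner (- T b) y + ((1/2) * inner (T b) b - c))"
proof
  fix y
  have s: "inner (T y) b = inner (T b) y" using sym_T[of y b] by (simp add: inner_commute)
  show "conjugate h y = (1/2) * inner (T y) y + inner (- T b) y + ((1/2) * inner (T b) b - c)"
    unfolding conj_eq[OF hq] using s
    by (simp add: linear_diff[OF lin_T] inner_diff_left inner_diff_right inner_commute algebra_simps)
qed

lemma conj_bregman:
  assumes hq: "h = (\<lambda>x. (1/2) * inner (S x) x + inner b x + c)"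
  shows "bregman (conjugate h) x y = (1/2) * inner (T (x - y)) (x - y)"
  unfolding conj_form[OF hq] by (rule quad_bregman[OF lin_T sym_T])

lemma gain_one:
  assumes hq: "h = (\<lambda>x. (1/2) * inner (S x) x + inner b x + c)"
  shows "gain_function h (\<lambda>_ _ _. 1)"
  unfolding gain_function_def conj_bregman[OF hq]
  by (auto simp: linear_scale[OF lin_T] power2_eq_square)

end



lemma avg_bregman:
  fixes fs :: "nat \<Rightarrow> 'a::euclidean_space \<Rightarrow> real"
  assumes n: "n > 0" and diff: "\<forall>i<n. \<forall>x. fs i differentiable (at x)"
  shows "bregman (avg_fun n fs) x y = (\<Sum>i<n. bregman (fs i) x y) / real n"
proof -
  have "GDERIV (avg_fun n fs) y :> (1 / real n) *\<^sub>R (\<Sum>i<n. grad (fs i) y)"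
    by (rule avg_gderiv) (use diff grad_works in auto)
  then have g: "grad (avg_fun n fs) y = (1 / real n) *\<^sub>R (\<Sum>i<n. grad (fs i) y)" by (rule grad_eq)
  show ?thesis unfolding bregman_def g
    by (simp add: avg_fun_def sum_subtractf inner_sum_left diff_divide_distrib)
qed

theorem corollary1:
  fixes fs :: "nat \<Rightarrow> real^'d \<Rightarrow> real"
    and h :: "real^'d \<Rightarrow> real"
    and A :: "real^'d^'d" and b :: "real^'d" and c :: real
    and n :: nat and L \<mu> :: real and x0 xstar :: "real^'d"
  assumes n: "n \<ge> 1"
    and cvx: "\<forall>i<n. convex_on UNIV (fs i)"
    and diff: "\<forall>i<n. \<forall>x. fs i differentiable (at x)"
    and smooth: "\<forall>i<n. rel_smooth L (fs i) h"
    and strong: "rel_strongly_convex \<mu> (avg_fun n fs) h"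
    and mu_pos: "\<mu> > 0"
    and h_quad: "h = (\<lambda>x. (1/2) * inner x (A *v x) + inner b x + c)"
    and h_strict: "\<forall>x. x \<noteq> 0 \<longrightarrow> inner x (A *v x) > 0"
    and xstar_min: "\<forall>x. avg_fun n fs xstar \<le> avg_fun n fs x"
  shows "gain_function h (\<lambda>_ _ _. 1) \<and>
    (\<forall>t. expect_idx n t (\<lambda>is. saga_psi h fs n (1 / (8 * L)) xstar
                                  (saga_state h fs n (1 / (8 * L)) x0 is))
        \<le> (1 - min (1 / (8 * (L / \<mu>))) (1 / (2 * real n))) ^ t
           * saga_psi h fs n (1 / (8 * L)) xstar (x0, \<lambda>_. x0))"
proof -
  define S where "S = (\<lambda>x::real^'d. (1/2) *\<^sub>R (A *v x + x v* A))"
  have linS: "linear S"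
    unfolding S_def by (rule linearI)
      (simp_all add: matrix_vector_right_distrib vector_matrix_left_distrib matrix_vector_mult_scaleR
        scaleR_vector_matrix_assoc algebra_simps)
  have tr: "inner u (v v* A) = inner v (A *v u)" for u v :: "real^'d"
    using dot_lmul_matrix[of v A u] by (simp add: inner_commute)
  have symS: "inner u (S v) = inner (S u) v" for u v
    unfolding S_def using tr[of u v] tr[of v u]
    by (simp add: inner_add_right inner_add_left inner_commute)
  have qS: "inner x (S x) = inner x (A *v x)" for x
    unfolding S_def using tr[of x x] by (simp add: inner_add_right)
  have posS: "inner v (S v) > 0" if "v \<noteq> 0" for v
    using h_strict that qS by simp
  interpret P: pdop S using linS symS posS by (simp add: pdop_def)
  have hq': "h = (\<lambda>x. (1/2) * inner (S x) x + inner b x + c)"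
    unfolding h_quad using qS by (auto simp: inner_commute)
  have gradh: "grad h x = S x + b" for x
    unfolding hq' by (rule grad_eq[OF quad_gderiv[OF linS symS]])
  have bregh: "bregman h x y = (1/2) * P.q (x - y)" for x y
    unfolding hq' quad_bregman[OF linS symS] P.q_def by (simp add: inner_commute)
  have sm: "bregman (fs i) x y \<le> L * ((1/2) * P.q (x - y))" if "i < n" for i x y
    using smooth that unfolding rel_smooth_def bregh by auto
  have st: "\<mu> * ((1/2) * P.q (x - y)) \<le> bregman (avg_fun n fs) x y" for x y
    using strong unfolding rel_strongly_convex_def bregh by auto
  have npos: "n > 0" using n by simp
  have Lpos: "L > 0"
  proof -
    obtain v :: "real^'d" where v: "v \<in> Basis" using nonempty_Basis by blast
    then have "v \<noteq> 0" by auto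
    then have qv: "P.q (v - 0) > 0" unfolding P.q_def using posS by simp
    have "bregman (avg_fun n fs) v 0 = (\<Sum>i<n. bregman (fs i) v 0) / real n"
      by (rule avg_bregman[OF npos diff])
    also have "\<dots> \<le> (\<Sum>i<n. L * ((1/2) * P.q (v - 0))) / real n"
      by (intro divide_right_mono sum_mono sm) auto
    also have "\<dots> = L * ((1/2) * P.q (v - 0))" using npos by simp
    finally have "\<mu> * ((1/2) * P.q (v - 0)) \<le> L * ((1/2) * P.q (v - 0))" using st[of v 0] by linarith
    then have "\<mu> \<le> L" using qv by (simp add: mult_le_cancel_right)
    then show ?thesis using mu_pos by simp
  qed
  interpret Sg: saga S h fs n L \<mu> b xstar
    by unfold_locales (use npos cvx diff sm Lpos st gradh xstar_min in auto)
  have r_eq: "1 / (8 * (L / \<mu>)) = \<mu> / (8 * L)" using mu_pos by simp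
  define r where "r = 1 - min (\<mu> / (8 * L)) (1 / (2 * real n))"
  have r_nn: "r \<ge> 0"
  proof -
    have "min (\<mu> / (8 * L)) (1 / (2 * real n)) \<le> 1 / (2 * real n)" by simp
    also have "\<dots> \<le> 1" using npos by simp
    finally show ?thesis unfolding r_def by simp
  qed
  have iter: "expect_idx n t (\<lambda>is. saga_psi h fs n (1 / (8 * L)) xstar
                                  (foldl (saga_step h fs n (1 / (8 * L))) (x0, \<lambda>_. x0) is))
        \<le> r ^ t * saga_psi h fs n (1 / (8 * L)) xstar (x0, \<lambda>_. x0)" for t
  proof (rule expect_iter[OF npos r_nn])
    fix s :: "(real^'d) \<times> (nat \<Rightarrow> real^'d)"
    obtain x \<phi> where s: "s = (x, \<phi>)" by (cases s)
    show "(\<Sum>i<n. saga_psi h fs n (1 / (8 * L)) xstar (saga_step h fs n (1 / (8 * L)) s i)) / real n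
      \<le> r * saga_psi h fs n (1 / (8 * L)) xstar s"
      unfolding s r_def by (rule Sg.one_step[OF bregh])
  qed
  show ?thesis
    using P.gain_one[OF hq'] iter unfolding saga_state_def r_eq r_def by simp
qed


end
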